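(* Let $\Lambda$ be a $\mathbb Z$-lattice of rank $\mu\ge1$ with a unimodular bilinear form $L$, let $M_h$ be the automorphism with $L(M_h(a),b)=-L(b,a)$ for all $a,b\in\Lambda$, and assume $M_h$ is of finite order. (a) For each eigenvalue $\lambda\ne1$ of $M_h$, the sesquilinear form $h_\lambda:\Lambda_\lambda\times\Lambda_\lambda\to\mathbb C$, $h_\lambda(a,b):=\sqrt{-\lambda}\cdot L(a,\bar b)$, is hermitian, i.e. $h_\lambda(b,a)=\overline{h_\lambda(a,b)}$; in particular $\sqrt{-\lambda}L(a,\bar a)\in\mathbb R$. Together these define a hermitian form $h:=\bigoplus_{\lambda\ne1}h_\lambda$. (b) For an $M_h$-invariant subspace $V\subset\Lambda_{\mathbb C}$ on which $1$ is not an eigenvalue of $M_h$, the following are equivalent: ($\alpha$) $h|_V$ is positive definite; ($\beta$) the hermitian form $(a,b)\mapsto L(a,\bar b)+L(\bar b,a)$ on $V$ is positive definite.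
   Context: $\Lambda_{\mathbb C}:=\Lambda\otimes\mathbb C$, $L$ extended bilinearly, complex conjugation with respect to $\Lambda$; $\Lambda_\lambda:=\ker(M_h-\lambda\,\mathrm{id})\subset\Lambda_{\mathbb C}$. The square root on $S^1-\{-1\}$ is $\sqrt{e^{2\pi i\alpha}}:=e^{\pi i\alpha}$ for $\alpha\in(-\tfrac12,\tfrac12)$. *)

theory Defs
  imports "HOL-Analysis.Analysis"
begin

text \<open>The lattice \<Lambda> is \<int>^n (n = CARD('n) = rank \<mu> \<ge> 1), embedded in
  \<Lambda>_C = complex^'n.  The bilinear form L is given by its Gram matrix A
  (integer entries), extended bilinearly to \<Lambda>_C.\<close>

definition int_vec :: "complex^'n \<Rightarrow> bool" where
  "int_vec v \<longleftrightarrow> (\<forall>i. v$i \<in> \<int>)"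

definition int_mat :: "complex^'n^'m \<Rightarrow> bool" where
  "int_mat A \<longleftrightarrow> (\<forall>i j. A$i$j \<in> \<int>)"

definition Lform :: "complex^'n^'n \<Rightarrow> complex^'n \<Rightarrow> complex^'n \<Rightarrow> complex" where
  "Lform A a b = (\<Sum>i\<in>UNIV. \<Sum>j\<in>UNIV. a$i * A$i$j * b$j)"

definition vcnj :: "complex^'n \<Rightarrow> complex^'n" where
  "vcnj v = (\<chi> i. cnj (v$i))"

definition eigsp :: "complex^'n^'n \<Rightarrow> complex \<Rightarrow> (complex^'n) set" where
  "eigsp M lam = {v. M *v v = lam *s v}"

definition is_eigval :: "complex^'n^'n \<Rightarrow> complex \<Rightarrow> bool" where
  "is_eigval M lam \<longleftrightarrow> (\<exists>v. v \<noteq> 0 \<and> M *v v = lam *s v)"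

definition sqrtS1 :: "complex \<Rightarrow> complex" where
  "sqrtS1 z = (THE w. \<exists>\<alpha>::real. -1/2 < \<alpha> \<and> \<alpha> < 1/2 \<and>
       z = exp (2 * pi * \<i> * of_real \<alpha>) \<and> w = exp (pi * \<i> * of_real \<alpha>))"

definition hlam :: "complex^'n^'n \<Rightarrow> complex \<Rightarrow> complex^'n \<Rightarrow> complex^'n \<Rightarrow> complex" where
  "hlam A lam a b = sqrtS1 (- lam) * Lform A a (vcnj b)"

definition eigcomp :: "complex^'n^'n \<Rightarrow> complex \<Rightarrow> complex^'n \<Rightarrow> complex^'n" where
  "eigcomp M lam a = (THE f. (\<forall>\<mu>. is_eigval M \<mu> \<longrightarrow> f \<mu> \<in> eigsp M \<mu>) \<and>
        (\<forall>\<mu>. \<not> is_eigval M \<mu> \<longrightarrow> f \<mu> = 0) \<and>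
        a = (\<Sum>\<mu>\<in>{\<mu>. is_eigval M \<mu>}. f \<mu>)) lam"

definition hform :: "complex^'n^'n \<Rightarrow> complex^'n^'n \<Rightarrow> complex^'n \<Rightarrow> complex^'n \<Rightarrow> complex" where
  "hform A M a b = (\<Sum>lam\<in>{l. is_eigval M l \<and> l \<noteq> 1}.
        hlam A lam (eigcomp M lam a) (eigcomp M lam b))"

definition csubspace :: "(complex^'n) set \<Rightarrow> bool" where
  "csubspace V \<longleftrightarrow> 0 \<in> V \<and> (\<forall>x\<in>V. \<forall>y\<in>V. x + y \<in> V) \<and> (\<forall>c. \<forall>x\<in>V. c *s x \<in> V)"

definition pos_def_on :: "(complex^'n) set \<Rightarrow> (complex^'n \<Rightarrow> complex^'n \<Rightarrow> complex) \<Rightarrow> bool" where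
  "pos_def_on V f \<longleftrightarrow> (\<forall>v\<in>V. v \<noteq> 0 \<longrightarrow> Im (f v v) = 0 \<and> Re (f v v) > 0)"

end

theory Submission
  imports Defs
begin

lemma mv_sum: "finite S \<Longrightarrow> (M::complex^'n^'n) *v sum f S = (\<Sum>i\<in>S. M *v f i)"
  by (induction S rule: finite_induct) (auto simp: matrix_vector_right_distrib)

lemma smult_sum: "(c::complex) *s sum f S = (\<Sum>i\<in>S. c *s (f i :: complex^'n))"
  by (simp add: vec_eq_iff sum_distrib_left)

lemma sum_smult: "(sum g S::complex) *s (x::complex^'n) = (\<Sum>i\<in>S. g i *s x)"
  by (simp add: vec_eq_iff sum_distrib_right)

lemma Lform_add1: "Lform A (a + b) c = Lform A a c + Lform A b c"
  by (simp add: Lform_def distrib_right distrib_left sum.distrib)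
lemma Lform_add2: "Lform A a (b + c) = Lform A a b + Lform A a c"
  by (simp add: Lform_def distrib_right distrib_left sum.distrib)
lemma Lform_smult1: "Lform A (s *s a) c = s * Lform A a c"
  by (simp add: Lform_def sum_distrib_left mult.assoc)
lemma Lform_smult2: "Lform A a (s *s c) = s * Lform A a c"
  by (simp add: Lform_def sum_distrib_left mult_ac)
lemma Lform_zero1[simp]: "Lform A 0 c = 0" by (simp add: Lform_def)
lemma Lform_zero2[simp]: "Lform A a 0 = 0" by (simp add: Lform_def)
lemma Lform_sum1: "finite S \<Longrightarrow> Lform A (sum f S) c = (\<Sum>i\<in>S. Lform A (f i) c)"
  by (induction S rule: finite_induct) (auto simp: Lform_add1)
lemma Lform_sum2: "finite S \<Longrightarrow> Lform A c (sum f S) = (\<Sum>i\<in>S. Lform A c (f i))"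
  by (induction S rule: finite_induct) (auto simp: Lform_add2)

lemma vcnj_add: "vcnj (a + b) = vcnj a + vcnj b" by (simp add: vcnj_def vec_eq_iff)
lemma vcnj_zero[simp]: "vcnj 0 = 0" by (simp add: vcnj_def vec_eq_iff)
lemma vcnj_smult: "vcnj (c *s a) = cnj c *s vcnj a" by (simp add: vcnj_def vec_eq_iff)
lemma vcnj_vcnj[simp]: "vcnj (vcnj a) = a" by (simp add: vcnj_def vec_eq_iff)
lemma vcnj_sum: "finite S \<Longrightarrow> vcnj (sum f S) = (\<Sum>i\<in>S. vcnj (f i))"
  by (induction S rule: finite_induct) (auto simp: vcnj_add)
lemma vcnj_eq0[simp]: "vcnj a = 0 \<longleftrightarrow> a = 0" by (metis vcnj_vcnj vcnj_zero)

lemma vcnj_mv: "(\<forall>i j. cnj (M$i$j) = M$i$j) \<Longrightarrow> vcnj (M *v v) = M *v vcnj v"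
  by (simp add: vcnj_def vec_eq_iff matrix_vector_mult_def)

lemma cnj_Lform: "(\<forall>i j. cnj (A$i$j) = A$i$j) \<Longrightarrow> cnj (Lform A a b) = Lform A (vcnj a) (vcnj b)"
  by (simp add: Lform_def vcnj_def)

locale fo =
  fixes M :: "complex^'n^'n" and k :: nat
  assumes kpos: "k > 0" and Mk: "((\<lambda>v. M *v v) ^^ k) = id"
begin

definition Mp :: "nat \<Rightarrow> complex^'n \<Rightarrow> complex^'n" where
  "Mp j v = ((\<lambda>v. M *v v) ^^ j) v"

definition proj :: "complex \<Rightarrow> complex^'n \<Rightarrow> complex^'n" where
  "proj lam v = (\<Sum>j<k. (cnj lam ^ j / of_nat k) *s Mp j v)"

lemma Mp_0[simp]: "Mp 0 v = v" by (simp add: Mp_def)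
lemma Mp_Suc: "Mp (Suc j) v = M *v Mp j v" by (simp add: Mp_def)
lemma Mp_k: "Mp k v = v" using Mk by (simp add: Mp_def)
lemma Mp_add: "Mp j (a + b) = Mp j a + Mp j b"
  by (induction j) (auto simp: Mp_Suc matrix_vector_right_distrib)
lemma Mp_smult: "Mp j (c *s a) = c *s Mp j a"
  by (induction j) (auto simp: Mp_Suc vector_scalar_commute)
lemma Mp_zero[simp]: "Mp j 0 = 0"
  by (induction j) (auto simp: Mp_Suc)
lemma Mp_sum: "finite S \<Longrightarrow> Mp j (sum f S) = (\<Sum>i\<in>S. Mp j (f i))"
  by (induction S rule: finite_induct) (auto simp: Mp_add)

lemma proj_add: "proj l (a + b) = proj l a + proj l b"
  by (simp add: proj_def Mp_add vector_add_ldistrib sum.distrib)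
lemma proj_zero[simp]: "proj l 0 = 0" by (simp add: proj_def)
lemma proj_sum: "finite S \<Longrightarrow> proj l (sum f S) = (\<Sum>i\<in>S. proj l (f i))"
  by (induction S rule: finite_induct) (auto simp: proj_add)

lemma Mp_eig: "x \<in> eigsp M mu \<Longrightarrow> Mp j x = mu ^ j *s x"
  by (induction j) (auto simp: Mp_Suc eigsp_def vector_scalar_commute vector_smult_assoc mult_ac)

lemma eig_root: "is_eigval M mu \<Longrightarrow> mu ^ k = 1"
proof -
  assume "is_eigval M mu"
  then obtain v where v: "v \<noteq> 0" "M *v v = mu *s v" unfolding is_eigval_def by blast
  then have "v \<in> eigsp M mu" by (simp add: eigsp_def)
  from Mp_eig[OF this, of k] have "v = mu ^ k *s v" by (simp add: Mp_k)
  then have "1 *s v = mu ^ k *s v" by simp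
  with v show ?thesis by (metis vector_mul_rcancel)
qed

lemma root_norm: "(mu::complex) ^ k = 1 \<Longrightarrow> cnj mu * mu = 1"
proof -
  assume "mu ^ k = 1"
  then have "norm mu = 1" using power_eq_1_iff kpos by blast
  then show ?thesis by (metis complex_norm_square mult.commute of_real_1 power_one)
qed

lemma proj_eig: assumes "lam ^ k = 1" shows "M *v proj lam v = lam *s proj lam v"
proof -
  have cl: "lam * cnj lam = 1" using root_norm[OF assms] by (simp add: mult.commute)
  define g where "g j = (cnj lam ^ j / of_nat k) *s Mp j v" for j
  have "M *v proj lam v = (\<Sum>j<k. (cnj lam ^ j / of_nat k) *s Mp (Suc j) v)"
    by (simp add: proj_def mv_sum vector_scalar_commute Mp_Suc)
  also have "\<dots> = (\<Sum>j<k. lam *s g (Suc j))"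
    by (intro sum.cong refl) (simp add: g_def vector_smult_assoc cl mult.assoc[symmetric])
  also have "\<dots> = lam *s (\<Sum>j<k. g (Suc j))" by (simp add: smult_sum)
  also have "(\<Sum>j<k. g (Suc j)) = (\<Sum>j<k. g j)"
  proof -
    have "g k = g 0" using assms by (simp add: g_def Mp_k flip: complex_cnj_power)
    have "(\<Sum>j<Suc k. g j) = g 0 + (\<Sum>j<k. g (Suc j))" by (rule sum.lessThan_Suc_shift)
    moreover have "(\<Sum>j<Suc k. g j) = (\<Sum>j<k. g j) + g k" by simp
    ultimately show ?thesis using \<open>g k = g 0\<close> by (simp add: add.commute)
  qed
  finally show ?thesis by (simp add: g_def proj_def)
qed

lemma geom0: "(z::complex) ^ k = 1 \<Longrightarrow> z \<noteq> 1 \<Longrightarrow> (\<Sum>j<k. z ^ j) = 0"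
  by (simp add: geometric_sum)

lemma proj_on_eig:
  assumes "lam ^ k = 1" "mu ^ k = 1" "x \<in> eigsp M mu"
  shows "proj lam x = (if lam = mu then x else 0)"
proof -
  have "proj lam x = (\<Sum>j<k. ((cnj lam * mu) ^ j / of_nat k) *s x)"
    by (simp add: proj_def Mp_eig[OF assms(3)] vector_smult_assoc power_mult_distrib)
  also have "\<dots> = ((\<Sum>j<k. (cnj lam * mu) ^ j) / of_nat k) *s x"
    by (simp add: sum_smult sum_divide_distrib)
  finally have P: "proj lam x = ((\<Sum>j<k. (cnj lam * mu) ^ j) / of_nat k) *s x" .
  show ?thesis
  proof (cases "lam = mu")
    case True
    then show ?thesis using P root_norm[OF assms(1)] kpos by simp
  next
    case False
    have "(cnj lam * mu) ^ k = 1" using assms by (simp add: power_mult_distrib flip: complex_cnj_power)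
    moreover have "cnj lam * mu \<noteq> 1"
    proof
      assume "cnj lam * mu = 1"
      then have "lam * (cnj lam * mu) = lam" by simp
      then have "mu = lam" using root_norm[OF assms(1)] by (simp add: mult.assoc[symmetric] mult.commute[of lam])
      with False show False by simp
    qed
    ultimately show ?thesis using P False geom0 by simp
  qed
qed

end

context fo begin

lemma finR: "finite {z::complex. z ^ k = 1}"
  using kpos by (intro finite_roots_unity) auto

lemma sum_roots_pow: assumes "0 < j" "j < k" shows "(\<Sum>z\<in>{z::complex. z ^ k = 1}. z ^ j) = 0"
proof -
  define f where "f m = cis (2 * pi * real m / real k)" for m
  have bij: "bij_betw f {..<k} {z. z ^ k = 1}" unfolding f_def using Complex.bij_betw_roots_unity[OF kpos] .
  define \<zeta> where "\<zeta> = f j"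
  have "(\<Sum>z\<in>{z::complex. z ^ k = 1}. z ^ j) = (\<Sum>m<k. f m ^ j)"
    using bij by (intro sum.reindex_bij_betw[symmetric]) 
  also have "\<dots> = (\<Sum>m<k. \<zeta> ^ m)"
  proof (intro sum.cong refl)
    fix m :: nat
    have "f m ^ j = cis (real j * (2 * pi * real m / real k))" unfolding f_def by (rule Complex.DeMoivre)
    also have "\<dots> = cis (real m * (2 * pi * real j / real k))" by (simp add: field_simps)
    also have "\<dots> = \<zeta> ^ m" unfolding \<zeta>_def f_def by (rule Complex.DeMoivre[symmetric])
    finally show "f m ^ j = \<zeta> ^ m" .
  qed
  also have "\<dots> = 0"
  proof (rule geom0)
    show "\<zeta> ^ k = 1" using bij assms unfolding \<zeta>_def bij_betw_def by auto
    have "f 0 = 1" by (simp add: f_def)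
    moreover have "f j \<noteq> f 0" using bij assms kpos unfolding bij_betw_def inj_on_def by fastforce
    ultimately show "\<zeta> \<noteq> 1" by (simp add: \<zeta>_def)
  qed
  finally show ?thesis .
qed

lemma sum_proj: "(\<Sum>l\<in>{z::complex. z ^ k = 1}. proj l v) = v"
proof -
  let ?R = "{z::complex. z ^ k = 1}"
  have "(\<Sum>l\<in>?R. proj l v) = (\<Sum>j<k. (\<Sum>l\<in>?R. cnj l ^ j / of_nat k) *s Mp j v)"
    unfolding proj_def by (subst sum.swap) (simp add: sum_smult)
  also have "\<dots> = (\<Sum>j<k. (if j = 0 then 1 else 0) *s Mp j v)"
  proof (intro sum.cong refl)
    fix j assume j: "j \<in> {..<k}"
    show "(\<Sum>l\<in>?R. cnj l ^ j / of_nat k) *s Mp j v = (if j = 0 then 1 else 0) *s Mp j v"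
    proof (cases "j = 0")
      case True then show ?thesis using kpos by (simp add: card_roots_unity_eq)
    next
      case False
      have "(\<Sum>l\<in>?R. cnj l ^ j) = cnj (\<Sum>l\<in>?R. l ^ j)" by (simp flip: complex_cnj_power)
      also have "\<dots> = 0" using sum_roots_pow[of j] False j by simp
      finally show ?thesis using False by (simp flip: sum_divide_distrib)
    qed
  qed
  also have "\<dots> = v" using kpos by (simp add: if_distrib[where f="\<lambda>c. c *s _"] sum.delta' cong: if_cong)
  finally show ?thesis .
qed

abbreviation "E \<equiv> {mu. is_eigval M mu}"

lemma E_sub: "E \<subseteq> {z. z ^ k = 1}" using eig_root by auto
lemma finE: "finite E" using finite_subset[OF E_sub finR] .

lemma proj_in: "l ^ k = 1 \<Longrightarrow> proj l v \<in> eigsp M l"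
  using proj_eig by (simp add: eigsp_def)

lemma proj_nonE: "l ^ k = 1 \<Longrightarrow> \<not> is_eigval M l \<Longrightarrow> proj l v = 0"
  using proj_eig unfolding is_eigval_def by blast

lemma decomp: "v = (\<Sum>l\<in>E. proj l v)"
proof -
  have "(\<Sum>l\<in>E. proj l v) = (\<Sum>l\<in>{z::complex. z ^ k = 1}. proj l v)"
    using E_sub finR by (intro sum.mono_neutral_left) (auto simp: proj_nonE)
  then show ?thesis using sum_proj by simp
qed

lemma eigcomp_eq: "eigcomp M l v = (if is_eigval M l then proj l v else 0)"
proof -
  define f where "f = (\<lambda>mu. if is_eigval M mu then proj mu v else 0)"
  have "(THE f. (\<forall>\<mu>. is_eigval M \<mu> \<longrightarrow> f \<mu> \<in> eigsp M \<mu>) \<and>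
        (\<forall>\<mu>. \<not> is_eigval M \<mu> \<longrightarrow> f \<mu> = 0) \<and>
        v = (\<Sum>\<mu>\<in>{\<mu>. is_eigval M \<mu>}. f \<mu>)) = f"
  proof (rule the_equality)
    show "(\<forall>\<mu>. is_eigval M \<mu> \<longrightarrow> f \<mu> \<in> eigsp M \<mu>) \<and>
        (\<forall>\<mu>. \<not> is_eigval M \<mu> \<longrightarrow> f \<mu> = 0) \<and> v = (\<Sum>\<mu>\<in>E. f \<mu>)"
      using decomp[of v] by (auto simp: f_def proj_in eig_root)
  next
    fix g assume g: "(\<forall>\<mu>. is_eigval M \<mu> \<longrightarrow> g \<mu> \<in> eigsp M \<mu>) \<and>
        (\<forall>\<mu>. \<not> is_eigval M \<mu> \<longrightarrow> g \<mu> = 0) \<and> v = (\<Sum>\<mu>\<in>E. g \<mu>)"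
    show "g = f"
    proof
      fix l show "g l = f l"
      proof (cases "is_eigval M l")
        case True
        have "proj l v = (\<Sum>\<mu>\<in>E. proj l (g \<mu>))" using g finE by (metis proj_sum)
        also have "\<dots> = (\<Sum>\<mu>\<in>E. if l = \<mu> then g \<mu> else 0)"
        proof (intro sum.cong refl)
          fix mu assume "mu \<in> E"
          then show "proj l (g mu) = (if l = mu then g mu else 0)"
            using g True eig_root proj_on_eig by auto
        qed
        also have "\<dots> = g l" using True finE by (simp add: sum.delta)
        finally show ?thesis using True by (simp add: f_def)
      next
        case False then show ?thesis using g by (simp add: f_def)
      qed
    qed
  qed
  then show ?thesis unfolding eigcomp_def f_def by simp
qed

end

lemma sqrt_P_Q:
  assumes "-1/2 < \<alpha>" "\<alpha> < 1/2" "z = exp (2 * pi * \<i> * of_real \<alpha>)" "w = exp (pi * \<i> * of_real \<alpha>)"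
  shows "w ^ 2 = z \<and> Re w > 0 \<and> cnj w * w = 1"
proof -
  have w: "w = cis (pi * \<alpha>)" using assms(4) by (simp add: cis_conv_exp mult_ac)
  have z: "z = cis (2 * pi * \<alpha>)" using assms(3) by (simp add: cis_conv_exp mult_ac)
  have "w ^ 2 = cis (2 * (pi * \<alpha>))" unfolding w using Complex.DeMoivre[of "pi * \<alpha>" 2] by simp
  then have 1: "w ^ 2 = z" using z by (simp add: mult_ac)
  have "pi * (-1/2) < pi * \<alpha>" by (rule mult_strict_left_mono) (use assms pi_gt_zero in auto)
  moreover have "pi * \<alpha> < pi * (1/2)" by (rule mult_strict_left_mono) (use assms pi_gt_zero in auto)
  ultimately have "cos (pi * \<alpha>) > 0" by (intro cos_gt_zero_pi) auto
  then have 2: "Re w > 0" by (simp add: w)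
  have 3: "cnj w * w = 1" unfolding w using Complex.cis_mult[of "-(pi*\<alpha>)" "pi*\<alpha>"] by (simp add: cis_cnj)
  show ?thesis using 1 2 3 by simp
qed

lemma sqrtS1_props:
  assumes "norm (z::complex) = 1" "z \<noteq> -1"
  shows "sqrtS1 z ^ 2 = z \<and> Re (sqrtS1 z) > 0 \<and> cnj (sqrtS1 z) * sqrtS1 z = 1"
proof -
  define P where "P w \<longleftrightarrow> (\<exists>\<alpha>::real. -1/2 < \<alpha> \<and> \<alpha> < 1/2 \<and>
       z = exp (2 * pi * \<i> * of_real \<alpha>) \<and> w = exp (pi * \<i> * of_real \<alpha>))" for w
  have z0: "z \<noteq> 0" using assms by auto
  define \<theta> where "\<theta> = Arg z"
  have zc: "z = cis \<theta>" using cis_Arg[OF z0] assms(1) by (simp add: \<theta>_def sgn_eq)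
  have th: "-pi < \<theta>" "\<theta> \<le> pi" using Arg_bounded[of z] by (auto simp: \<theta>_def)
  have "\<theta> \<noteq> pi" using zc assms(2) by auto
  with th have th2: "\<theta> < pi" by simp
  define \<alpha> where "\<alpha> = \<theta> / (2 * pi)"
  have a: "-1/2 < \<alpha>" "\<alpha> < 1/2" using th th2 pi_gt_zero by (auto simp: \<alpha>_def field_simps)
  have "z = exp (2 * pi * \<i> * of_real \<alpha>)"
    using zc by (simp add: \<alpha>_def cis_conv_exp field_simps)
  then have Pw: "P (exp (pi * \<i> * of_real \<alpha>))" using a unfolding P_def by blast
  have Q: "w ^ 2 = z \<and> Re w > 0 \<and> cnj w * w = 1" if "P w" for w
    using that sqrt_P_Q unfolding P_def by blast
  have uniq: "w = exp (pi * \<i> * of_real \<alpha>)" if "P w" for w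
  proof -
    let ?w0 = "exp (pi * \<i> * of_real \<alpha>)"
    have q1: "w ^ 2 = z" "Re w > 0" using Q[OF that] by auto
    have q2: "?w0 ^ 2 = z" "Re ?w0 > 0" using Q[OF Pw] by auto
    have "(w - ?w0) * (w + ?w0) = 0" using q1 q2 by (simp add: algebra_simps power2_eq_square)
    moreover have "w + ?w0 \<noteq> 0"
    proof
      assume "w + ?w0 = 0" then have "Re (w + ?w0) = 0" by simp
      with q1 q2 show False by simp
    qed
    ultimately show ?thesis by simp
  qed
  have "sqrtS1 z = exp (pi * \<i> * of_real \<alpha>)"
    unfolding sqrtS1_def using Pw uniq unfolding P_def by (intro the_equality) blast+
  then show ?thesis using Q[OF Pw] by simp
qed

locale foL = fo M k for M :: "complex^'n^'n" and k +
  fixes A :: "complex^'n^'n"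
  assumes A_real: "\<forall>i j. cnj (A$i$j) = A$i$j"
    and M_real: "\<forall>i j. cnj (M$i$j) = M$i$j"
    and Lrel: "\<And>a b. Lform A (M *v a) b = - Lform A b a"
begin

lemma Lpres: "Lform A (M *v x) (M *v y) = Lform A x y"
  using Lrel by simp

lemma vcnj_eig: "x \<in> eigsp M l \<Longrightarrow> vcnj x \<in> eigsp M (cnj l)"
  by (simp add: eigsp_def vcnj_mv[OF M_real, symmetric] vcnj_smult)

lemma Lswap: "x \<in> eigsp M l \<Longrightarrow> Lform A y x = - l * Lform A x y"
proof -
  assume "x \<in> eigsp M l"
  then have "Lform A (M *v x) y = l * Lform A x y" by (simp add: eigsp_def Lform_smult1)
  then have "- Lform A y x = l * Lform A x y" using Lrel[of x y] by simp
  then have "Lform A y x = - (l * Lform A x y)" by (metis minus_minus)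
  then show ?thesis by simp
qed

lemma Lorth:
  assumes "l ^ k = 1" "m ^ k = 1" "l \<noteq> m" "x \<in> eigsp M l" "y \<in> eigsp M m"
  shows "Lform A x (vcnj y) = 0"
proof -
  have y': "vcnj y \<in> eigsp M (cnj m)" using vcnj_eig assms(5) .
  have "Lform A x (vcnj y) = Lform A (M *v x) (M *v vcnj y)" by (simp add: Lpres)
  also have "\<dots> = (l * cnj m) * Lform A x (vcnj y)"
    using assms(4) y' by (simp add: eigsp_def Lform_smult1 Lform_smult2)
  finally have e: "(1 - l * cnj m) * Lform A x (vcnj y) = 0" by (simp add: algebra_simps)
  have "l * cnj m \<noteq> 1"
  proof
    assume "l * cnj m = 1"
    then have "l * cnj m * m = m" by simp
    then have "l = m" using root_norm[OF assms(2)] by (simp add: mult.assoc)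
    with assms(3) show False by simp
  qed
  with e show ?thesis by simp
qed

lemma herm:
  assumes "is_eigval M l" "l \<noteq> 1" "a \<in> eigsp M l" "b \<in> eigsp M l"
  shows "hlam A l b a = cnj (hlam A l a b)"
proof -
  have r: "l ^ k = 1" using eig_root assms(1) .
  define s where "s = sqrtS1 (- l)"
  have "norm l = 1" using power_eq_1_iff[OF r] kpos by simp
  then have sp: "s ^ 2 = - l" "cnj s * s = 1"
    using sqrtS1_props[of "-l"] assms(2) by (auto simp: s_def)
  have "cnj (hlam A l a b) = cnj s * Lform A (vcnj a) b"
    by (simp add: hlam_def s_def cnj_Lform[OF A_real])
  also have "Lform A (vcnj a) b = - l * Lform A b (vcnj a)" using Lswap assms(4) .
  also have "cnj s * (- l * Lform A b (vcnj a)) = (cnj s * s) * s * Lform A b (vcnj a)"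
  proof -
    have "- l = s * s" using sp by (simp add: power2_eq_square)
    then have "cnj s * (- l * Lform A b (vcnj a)) = cnj s * ((s * s) * Lform A b (vcnj a))" by simp
    then show ?thesis by (simp add: mult_ac)
  qed
  also have "(cnj s * s) * s * Lform A b (vcnj a) = s * Lform A b (vcnj a)" using sp by simp
  finally show ?thesis by (simp add: hlam_def s_def)
qed

end

lemma sum_real_pos:
  assumes "finite S" "\<forall>l\<in>S. w l \<in> \<real> \<and> Re (w l) \<ge> 0" "\<exists>l\<in>S. Re (w l) > 0"
  shows "Im (sum w S) = 0 \<and> Re (sum w S) > 0"
proof
  show "Im (sum w S) = 0" using assms(2) by (simp add: Im_sum complex_is_Real_iff)
  from assms(3) obtain l where "l \<in> S" "Re (w l) > 0" by blast
  then show "Re (sum w S) > 0" unfolding Re_sum using assms(1,2) by (intro sum_pos2[of S l]) auto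
qed

context foL begin

definition sq :: "complex \<Rightarrow> complex" where "sq l = sqrtS1 (- l)"
definition q :: "complex \<Rightarrow> complex^'n \<Rightarrow> complex" where "q l x = sq l * Lform A x (vcnj x)"

abbreviation "E' \<equiv> E - {1}"

lemma sq_props: assumes "l \<in> E'" shows "sq l ^ 2 = - l" "Re (sq l) > 0" "cnj (sq l) * sq l = 1"
proof -
  have r: "l ^ k = 1" using eig_root assms by auto
  have "norm l = 1" using power_eq_1_iff[OF r] kpos by simp
  show "sq l ^ 2 = - l" "Re (sq l) > 0" "cnj (sq l) * sq l = 1"
  proof -
    have "-l \<noteq> -1" using assms by simp
    moreover have "norm (-l) = 1" using \<open>norm l = 1\<close> by simp
    ultimately show "sq l ^ 2 = - l" "Re (sq l) > 0" "cnj (sq l) * sq l = 1"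
      using sqrtS1_props[of "-l"] unfolding sq_def by blast+
  qed
qed

lemma coef: assumes "l \<in> E'" shows "1 - l = of_real (2 * Re (sq l)) * sq l"
proof -
  have "of_real (2 * Re (sq l)) * sq l = (sq l + cnj (sq l)) * sq l"
    by (simp add: complex_add_cnj)
  also have "\<dots> = sq l ^ 2 + cnj (sq l) * sq l" by (simp add: algebra_simps power2_eq_square)
  also have "\<dots> = 1 - l" using sq_props[OF assms] by simp
  finally show ?thesis by simp
qed

lemma q_real: assumes "l \<in> E'" "x \<in> eigsp M l" shows "q l x \<in> \<real>"
proof -
  have "hlam A l x x = cnj (hlam A l x x)" using herm[of l x x] assms by blast
  then show ?thesis by (simp add: q_def hlam_def sq_def Reals_cnj_iff)
qed

lemma finE': "finite E'" using finE by simp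

lemma hform_eq: "hform A M v v = (\<Sum>l\<in>E'. q l (proj l v))"
proof -
  have "{l. is_eigval M l \<and> l \<noteq> 1} = E'" by auto
  then have "hform A M v v = (\<Sum>l\<in>E'. hlam A l (eigcomp M l v) (eigcomp M l v))"
    unfolding hform_def by simp
  also have "\<dots> = (\<Sum>l\<in>E'. q l (proj l v))"
  proof (intro sum.cong refl)
    fix l assume "l \<in> E'"
    then have "eigcomp M l v = proj l v" using eigcomp_eq by simp
    then show "hlam A l (eigcomp M l v) (eigcomp M l v) = q l (proj l v)"
      by (simp add: hlam_def q_def sq_def)
  qed
  finally show ?thesis .
qed

lemma form2_eq: "Lform A v (vcnj v) + Lform A (vcnj v) v =
   (\<Sum>l\<in>E'. of_real (2 * Re (sq l)) * q l (proj l v))"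
proof -
  define c where "c l = proj l v" for l
  define t where "t l = Lform A (c l) (vcnj (c l))" for l
  have v: "v = sum c E" unfolding c_def by (rule decomp)
  have inE: "l \<in> E \<Longrightarrow> c l \<in> eigsp M l \<and> l ^ k = 1" for l
    using eig_root proj_in unfolding c_def by auto
  have "Lform A v (vcnj v) = (\<Sum>m\<in>E. \<Sum>l\<in>E. Lform A (c l) (vcnj (c m)))"
    by (subst (1 2) v) (simp add: Lform_sum1 Lform_sum2 vcnj_sum finE)
  also have "\<dots> = (\<Sum>m\<in>E. \<Sum>l\<in>E. if l = m then t l else 0)"
  proof (intro sum.cong refl)
    fix l m assume "m \<in> E" "l \<in> E"
    then show "Lform A (c l) (vcnj (c m)) = (if l = m then t l else 0)"
      using Lorth[of l m "c l" "c m"] inE[of l] inE[of m] by (auto simp: t_def)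
  qed
  also have "\<dots> = (\<Sum>l\<in>E. t l)" using finE by (simp add: sum.delta)
  finally have 1: "Lform A v (vcnj v) = (\<Sum>l\<in>E. t l)" .
  have "Lform A (vcnj v) v = (\<Sum>l\<in>E. \<Sum>m\<in>E. Lform A (vcnj (c m)) (c l))"
    by (subst (1 2) v) (simp add: Lform_sum1 Lform_sum2 vcnj_sum finE)
  also have "\<dots> = (\<Sum>l\<in>E. \<Sum>m\<in>E. if m = l then - l * t l else 0)"
  proof (intro sum.cong refl)
    fix l m assume "l \<in> E" "m \<in> E"
    then have "Lform A (vcnj (c m)) (c l) = - l * Lform A (c l) (vcnj (c m))"
      using Lswap inE[of l] by blast
    then show "Lform A (vcnj (c m)) (c l) = (if m = l then - l * t l else 0)"
      using Lorth[of l m "c l" "c m"] inE[of l] inE[of m] \<open>l \<in> E\<close> \<open>m \<in> E\<close> by (auto simp: t_def)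
  qed
  also have "\<dots> = (\<Sum>m\<in>E. - m * t m)" using finE by (simp add: sum.delta')
  finally have 2: "Lform A (vcnj v) v = (\<Sum>l\<in>E. - l * t l)" .
  have "Lform A v (vcnj v) + Lform A (vcnj v) v = (\<Sum>l\<in>E. (1 - l) * t l)"
    unfolding 1 2 sum.distrib[symmetric] by (intro sum.cong refl) (simp add: algebra_simps)
  also have "\<dots> = (\<Sum>l\<in>E'. (1 - l) * t l)"
    by (rule sum.mono_neutral_right[OF finE]) auto
  also have "\<dots> = (\<Sum>l\<in>E'. of_real (2 * Re (sq l)) * q l (proj l v))"
  proof (intro sum.cong refl)
    fix l assume l: "l \<in> E'"
    show "(1 - l) * t l = of_real (2 * Re (sq l)) * q l (proj l v)"
      unfolding coef[OF l] q_def t_def c_def by (simp only: mult.assoc)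
  qed
  finally show ?thesis .
qed

end

context foL begin

lemma single:
  assumes "l0 \<in> E'" "x \<in> eigsp M l0"
  shows "hform A M x x = q l0 x"
    and "Lform A x (vcnj x) + Lform A (vcnj x) x = of_real (2 * Re (sq l0)) * q l0 x"
proof -
  have pr: "proj l x = (if l = l0 then x else 0)" if "l \<in> E'" for l
    using proj_on_eig[of l l0 x] eig_root that assms by auto
  have "hform A M x x = (\<Sum>l\<in>E'. if l = l0 then q l0 x else 0)"
    unfolding hform_eq by (intro sum.cong refl) (simp add: pr q_def)
  also have "\<dots> = q l0 x" using assms(1) finE' by (simp add: sum.delta')
  finally show "hform A M x x = q l0 x" .
  have "Lform A x (vcnj x) + Lform A (vcnj x) x = (\<Sum>l\<in>E'. if l = l0 then of_real (2 * Re (sq l0)) * q l0 x else 0)"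
    unfolding form2_eq by (intro sum.cong refl) (simp add: pr q_def)
  also have "\<dots> = of_real (2 * Re (sq l0)) * q l0 x" using assms(1) finE' by (simp add: sum.delta')
  finally show "Lform A x (vcnj x) + Lform A (vcnj x) x = of_real (2 * Re (sq l0)) * q l0 x" .
qed

lemma sum_inV: assumes "csubspace V" "finite S" shows "(\<forall>i\<in>S. f i \<in> V) \<Longrightarrow> sum f S \<in> V"
  using assms(2) by (induction S rule: finite_induct) (use assms(1) in \<open>auto simp: csubspace_def\<close>)

lemma Mp_inV: "csubspace V \<Longrightarrow> (\<forall>v\<in>V. M *v v \<in> V) \<Longrightarrow> v \<in> V \<Longrightarrow> Mp j v \<in> V"
  by (induction j) (auto simp: Mp_Suc)

lemma proj_inV: "csubspace V \<Longrightarrow> (\<forall>v\<in>V. M *v v \<in> V) \<Longrightarrow> v \<in> V \<Longrightarrow> proj l v \<in> V"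
  unfolding proj_def by (rule sum_inV) (auto simp: Mp_inV csubspace_def)

lemma nonzero_comp:
  assumes V: "csubspace V" "\<forall>v\<in>V. M *v v \<in> V" "\<forall>v\<in>V. M *v v = v \<longrightarrow> v = 0"
    and v: "v \<in> V" "v \<noteq> 0"
  shows "\<exists>l\<in>E'. proj l v \<noteq> 0"
proof (rule ccontr)
  assume "\<not> ?thesis"
  then have z: "l \<in> E' \<Longrightarrow> proj l v = 0" for l by blast
  have "proj 1 v \<in> V" using proj_inV V v by blast
  moreover have "M *v proj 1 v = proj 1 v" using proj_eig[of 1 v] by simp
  ultimately have p1: "proj 1 v = 0" using V by blast
  have "v = (\<Sum>l\<in>E. proj l v)" by (rule decomp)
  also have "\<dots> = 0" by (intro sum.neutral) (use z p1 in blast)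
  finally show False using v by simp
qed

lemma equiv:
  assumes V: "csubspace V" "\<forall>v\<in>V. M *v v \<in> V" "\<forall>v\<in>V. M *v v = v \<longrightarrow> v = 0"
  shows "pos_def_on V (hform A M) \<longleftrightarrow> pos_def_on V (\<lambda>a b. Lform A a (vcnj b) + Lform A (vcnj b) a)"
proof -
  have cV: "proj l v \<in> V" if "v \<in> V" for l v using proj_inV V that by blast
  have ce: "proj l v \<in> eigsp M l" if "l \<in> E'" for l v using proj_in eig_root that by auto
  have q0: "q l 0 = 0" for l by (simp add: q_def)
  show ?thesis
  proof
    assume H: "pos_def_on V (hform A M)"
    have qpos: "q l (proj l v) \<in> \<real> \<and> Re (q l (proj l v)) \<ge> 0 \<and> (proj l v \<noteq> 0 \<longrightarrow> Re (q l (proj l v)) > 0)"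
      if "v \<in> V" "l \<in> E'" for v l
    proof (cases "proj l v = 0")
      case True then show ?thesis by (simp add: q0)
    next
      case False
      have "hform A M (proj l v) (proj l v) = q l (proj l v)" using single(1)[OF that(2) ce[OF that(2)]] .
      then have "Re (q l (proj l v)) > 0" using H False cV[OF that(1)] unfolding pos_def_on_def by metis
      then show ?thesis using q_real[OF that(2) ce[OF that(2)]] by simp
    qed
    show "pos_def_on V (\<lambda>a b. Lform A a (vcnj b) + Lform A (vcnj b) a)"
      unfolding pos_def_on_def
    proof (intro ballI impI)
      fix v assume v: "v \<in> V" "v \<noteq> 0"
      obtain l0 where l0: "l0 \<in> E'" "proj l0 v \<noteq> 0" using nonzero_comp[OF V v] by blast
      show "Im (Lform A v (vcnj v) + Lform A (vcnj v) v) = 0 \<and> Re (Lform A v (vcnj v) + Lform A (vcnj v) v) > 0"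
        unfolding form2_eq
      proof (rule sum_real_pos[OF finE'])
        show "\<forall>l\<in>E'. of_real (2 * Re (sq l)) * q l (proj l v) \<in> \<real> \<and> Re (of_real (2 * Re (sq l)) * q l (proj l v)) \<ge> 0"
        proof
          fix l assume l: "l \<in> E'"
          show "of_real (2 * Re (sq l)) * q l (proj l v) \<in> \<real> \<and> Re (of_real (2 * Re (sq l)) * q l (proj l v)) \<ge> 0"
            using qpos[OF v(1) l] sq_props(2)[OF l] by (auto intro: Reals_mult)
        qed
        show "\<exists>l\<in>E'. Re (of_real (2 * Re (sq l)) * q l (proj l v)) > 0"
          using qpos[OF v(1) l0(1)] l0 sq_props(2)[OF l0(1)] by (intro bexI[of _ l0]) auto
      qed
    qed
  next
    assume H: "pos_def_on V (\<lambda>a b. Lform A a (vcnj b) + Lform A (vcnj b) a)"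
    have qpos: "q l (proj l v) \<in> \<real> \<and> Re (q l (proj l v)) \<ge> 0 \<and> (proj l v \<noteq> 0 \<longrightarrow> Re (q l (proj l v)) > 0)"
      if "v \<in> V" "l \<in> E'" for v l
    proof (cases "proj l v = 0")
      case True then show ?thesis by (simp add: q0)
    next
      case False
      have e: "Lform A (proj l v) (vcnj (proj l v)) + Lform A (vcnj (proj l v)) (proj l v) = of_real (2 * Re (sq l)) * q l (proj l v)"
        using single(2)[OF that(2) ce[OF that(2)]] .
      have "Re (Lform A (proj l v) (vcnj (proj l v)) + Lform A (vcnj (proj l v)) (proj l v)) > 0"
        using H False cV[OF that(1)] unfolding pos_def_on_def by blast
      then have "2 * Re (sq l) * Re (q l (proj l v)) > 0" unfolding e by simp
      then have "Re (q l (proj l v)) > 0" using sq_props(2)[OF that(2)] by (simp add: zero_less_mult_iff)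
      then show ?thesis using q_real[OF that(2) ce[OF that(2)]] by simp
    qed
    show "pos_def_on V (hform A M)"
      unfolding pos_def_on_def
    proof (intro ballI impI)
      fix v assume v: "v \<in> V" "v \<noteq> 0"
      obtain l0 where l0: "l0 \<in> E'" "proj l0 v \<noteq> 0" using nonzero_comp[OF V v] by blast
      show "Im (hform A M v v) = 0 \<and> Re (hform A M v v) > 0"
        unfolding hform_eq
      proof (rule sum_real_pos[OF finE'])
        show "\<forall>l\<in>E'. q l (proj l v) \<in> \<real> \<and> Re (q l (proj l v)) \<ge> 0"
          using qpos[OF v(1)] by auto
        show "\<exists>l\<in>E'. Re (q l (proj l v)) > 0"
          using qpos[OF v(1) l0(1)] l0 by auto
      qed
    qed
  qed
qed

end

lemma axis_int: "int_vec (axis i (1::complex))"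
  by (simp add: int_vec_def axis_def)

lemma Lrel_C:
  fixes A M :: "complex^'n^'n"
  assumes M_rel: "\<forall>a b. int_vec a \<longrightarrow> int_vec b \<longrightarrow> Lform A (M *v a) b = - Lform A b a"
  shows "Lform A (M *v a) b = - Lform A b a"
proof -
  have L1: "Lform A (M *v (\<Sum>i\<in>UNIV. a$i *s axis i 1)) (\<Sum>j\<in>UNIV. b$j *s axis j 1) = (\<Sum>j\<in>UNIV. \<Sum>i\<in>UNIV. b$j * (a$i * Lform A (M *v axis i 1) (axis j 1)))"
    by (simp add: mv_sum vector_scalar_commute Lform_sum1 Lform_sum2 Lform_smult1 Lform_smult2 sum_distrib_left)
  have L2: "Lform A (\<Sum>j\<in>UNIV. b$j *s axis j 1) (\<Sum>i\<in>UNIV. a$i *s axis i 1) = (\<Sum>j\<in>UNIV. \<Sum>i\<in>UNIV. b$j * (a$i * Lform A (axis j 1) (axis i 1)))"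
    by (simp add: Lform_sum1 Lform_sum2 Lform_smult1 Lform_smult2 sum_distrib_left) (subst sum.swap, simp add: mult_ac)
  have "Lform A (M *v a) b = (\<Sum>j\<in>UNIV. \<Sum>i\<in>UNIV. b$j * (a$i * Lform A (M *v axis i 1) (axis j 1)))"
    using L1 by (simp only: basis_expansion)
  also have "\<dots> = (\<Sum>j\<in>UNIV. \<Sum>i\<in>UNIV. - (b$j * (a$i * Lform A (axis j 1) (axis i 1))))"
    by (intro sum.cong refl) (simp add: M_rel axis_int)
  also have "\<dots> = - Lform A b a"
    using L2 by (simp only: basis_expansion sum_negf)
  finally show ?thesis .
qed

theorem lemma2p2:
  fixes A M :: "complex^'n^'n"
  assumes A_int: "int_mat A"
    and A_unimod: "det A = 1 \<or> det A = -1"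
    and M_int: "int_mat M"
    and M_aut: "\<exists>N. int_mat N \<and> M ** N = mat 1 \<and> N ** M = mat 1"
    and M_rel: "\<forall>a b. int_vec a \<longrightarrow> int_vec b \<longrightarrow> Lform A (M *v a) b = - Lform A b a"
    and M_fin: "\<exists>k>0. ((\<lambda>v. M *v v) ^^ k) = id"
  shows "(\<forall>lam. is_eigval M lam \<and> lam \<noteq> 1 \<longrightarrow>
            (\<forall>a\<in>eigsp M lam. \<forall>b\<in>eigsp M lam. hlam A lam b a = cnj (hlam A lam a b))
          \<and> (\<forall>a\<in>eigsp M lam. sqrtS1 (- lam) * Lform A a (vcnj a) \<in> \<real>))
       \<and> (\<forall>V. csubspace V \<and> (\<forall>v\<in>V. M *v v \<in> V) \<and> (\<forall>v\<in>V. M *v v = v \<longrightarrow> v = 0) \<longrightarrow>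
            (pos_def_on V (hform A M) \<longleftrightarrow>
             pos_def_on V (\<lambda>a b. Lform A a (vcnj b) + Lform A (vcnj b) a)))"
proof -
  obtain k where k: "k > 0" "((\<lambda>v. M *v v) ^^ k) = id" using M_fin by blast
  have Ar: "\<forall>i j. cnj (A$i$j) = A$i$j"
  proof (intro allI)
    fix i j
    have "A$i$j \<in> \<int>" using A_int by (simp add: int_mat_def)
    then show "cnj (A$i$j) = A$i$j" by (auto elim!: Ints_cases)
  qed
  have Mr: "\<forall>i j. cnj (M$i$j) = M$i$j"
  proof (intro allI)
    fix i j
    have "M$i$j \<in> \<int>" using M_int by (simp add: int_mat_def)
    then show "cnj (M$i$j) = M$i$j" by (auto elim!: Ints_cases)
  qed
  interpret foL M k A
    by unfold_locales (use k Ar Mr Lrel_C[OF M_rel] in auto)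
  show ?thesis
  proof (intro conjI allI impI ballI)
    fix lam a b assume "is_eigval M lam \<and> lam \<noteq> 1" "a \<in> eigsp M lam" "b \<in> eigsp M lam"
    then show "hlam A lam b a = cnj (hlam A lam a b)" using herm by blast
  next
    fix lam a assume "is_eigval M lam \<and> lam \<noteq> 1" "a \<in> eigsp M lam"
    then have "hlam A lam a a = cnj (hlam A lam a a)" using herm by blast
    then show "sqrtS1 (- lam) * Lform A a (vcnj a) \<in> \<real>" by (simp add: hlam_def Reals_cnj_iff)
  next
    fix V :: "(complex^'n) set"
    assume "csubspace V \<and> (\<forall>v\<in>V. M *v v \<in> V) \<and> (\<forall>v\<in>V. M *v v = v \<longrightarrow> v = 0)"
    then show "pos_def_on V (hform A M) \<longleftrightarrow> pos_def_on V (\<lambda>a b. Lform A a (vcnj b) + Lform A (vcnj b) a)"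
      using equiv by blast
  qed
qed

end
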